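(* Let $n\ge 2$ and let $\Delta^o(Q_{4n})$ be the order super commuting graph of the generalized quaternion group $Q_{4n}$. (i) If $n$ is odd, the Sombor spectrum of $\Delta^o(Q_{4n})$ consists of $-(4n-1)\sqrt2$ with multiplicity $1$, $-(2n-1)\sqrt2$ with multiplicity $2n-3$, $-(2n+1)\sqrt2$ with multiplicity $2n-1$, and the three roots (with multiplicity) of \[\big(x-(4n-1)\sqrt2\big)\big(x-(2n-1)(2n-3)\sqrt2\big)\big(x-(2n-1)(2n+1)\sqrt2\big)-8(n-1)(10n^2-6n+1)\big(x-(2n-1)(2n+1)\sqrt2\big)-8n(10n^2-2n+1)\big(x-(2n-1)(2n-3)\sqrt2\big).\] (ii) If $n$ is even, the Sombor spectrum of $\Delta^o(Q_{4n})$ consists of $-(4n-1)\sqrt2$ with multiplicity $4n-1$ and $(4n-1)^2\sqrt2$ with multiplicity $1$.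
   Context: For a finite simple graph $\Gamma$ with vertices $u_1,\dots,u_N$, the Sombor matrix $S(\Gamma)$ has $(i,j)$ entry $\sqrt{\deg(u_i)^2+\deg(u_j)^2}$ if $u_i,u_j$ are adjacent and $0$ otherwise; the Sombor spectrum is the multiset of its eigenvalues. $Q_{4n}=\langle a,b: a^{2n}=e,\ a^n=b^2,\ ba=a^{-1}b\rangle$. The order super commuting graph $\Delta^o(G)$ has vertex set $G$, and distinct $g,h$ are adjacent iff $o(g)=o(h)$ or there exist distinct $g',h'\in G$ with $o(g')=o(g)$, $o(h')=o(h)$ and $g'h'=h'g'$; here $o(x)$ is the order of $x$. *)

theory Defs
  imports "HOL-Algebra.Multiplicative_Group" "Jordan_Normal_Form.Char_Poly"
begin

text \<open>Generalized quaternion group Q_{4n} = <a,b | a^(2n)=e, a^n=b^2, ba=a^(-1)b>,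
  realised on normal forms a^i b^j, encoded as (i,j) with i < 2n, j < 2.\<close>

definition quat_mult :: "nat \<Rightarrow> nat \<times> nat \<Rightarrow> nat \<times> nat \<Rightarrow> nat \<times> nat" where
  "quat_mult n x y =
     (let (i, j) = x; (k, l) = y in
       ((i + (if j = 0 then k else 2 * n - k) + (if j = 1 \<and> l = 1 then n else 0)) mod (2 * n),
        (j + l) mod 2))"

definition Quat :: "nat \<Rightarrow> (nat \<times> nat) monoid" where
  "Quat n = \<lparr> carrier = {..<2 * n} \<times> {..<2}, monoid.mult = quat_mult n, monoid.one = (0, 0) \<rparr>"

definition osc_adj :: "('a, 'b) monoid_scheme \<Rightarrow> 'a \<Rightarrow> 'a \<Rightarrow> bool" where
  "osc_adj G g h \<longleftrightarrow> g \<in> carrier G \<and> h \<in> carrier G \<and> g \<noteq> h \<and>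
     (group.ord G g = group.ord G h \<or>
      (\<exists>g' \<in> carrier G. \<exists>h' \<in> carrier G. g' \<noteq> h' \<and>
          group.ord G g' = group.ord G g \<and> group.ord G h' = group.ord G h \<and>
          g' \<otimes>\<^bsub>G\<^esub> h' = h' \<otimes>\<^bsub>G\<^esub> g'))"

definition osc_deg :: "('a, 'b) monoid_scheme \<Rightarrow> 'a \<Rightarrow> nat" where
  "osc_deg G g = card {h \<in> carrier G. osc_adj G g h}"

definition sombor_matrix :: "('a, 'b) monoid_scheme \<Rightarrow> (nat \<Rightarrow> 'a) \<Rightarrow> real mat" where
  "sombor_matrix G u = mat (card (carrier G)) (card (carrier G))
     (\<lambda>(i, j). if osc_adj G (u i) (u j)
               then sqrt (real (osc_deg G (u i))^2 + real (osc_deg G (u j))^2) else 0)"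

end

theory Submission
  imports Defs
begin


lemma sylvester_det:
  fixes X :: "'a :: field mat" and Y :: "'a mat"
  assumes X: "X \<in> carrier_mat N k" and Y: "Y \<in> carrier_mat k N"
  shows "det (1\<^sub>m N - X * Y) = det (1\<^sub>m k - Y * X)"
proof -
  define M where "M = four_block_mat (1\<^sub>m N) X Y (1\<^sub>m k)"
  have XY: "X * Y \<in> carrier_mat N N" using X Y by auto
  have YX: "Y * X \<in> carrier_mat k k" using X Y by auto
  have e1: "four_block_mat (1\<^sub>m N) X (0\<^sub>m k N) (1\<^sub>m k) * four_block_mat (1\<^sub>m N - X * Y) (0\<^sub>m N k) Y (1\<^sub>m k) = M"
    unfolding M_def
    apply (subst mult_four_block_mat[OF one_carrier_mat X zero_carrier_mat one_carrier_mat _ zero_carrier_mat Y one_carrier_mat])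
    using X Y XY by (auto)
  have e2: "four_block_mat (1\<^sub>m N) (0\<^sub>m N k) Y (1\<^sub>m k) * four_block_mat (1\<^sub>m N) X (0\<^sub>m k N) (1\<^sub>m k - Y * X) = M"
    unfolding M_def
    apply (subst mult_four_block_mat[OF one_carrier_mat zero_carrier_mat Y one_carrier_mat one_carrier_mat X zero_carrier_mat])
    using X Y YX by (auto)
  have c1: "1\<^sub>m N - X * Y \<in> carrier_mat N N" using XY by (intro minus_carrier_mat) auto
  have c2: "1\<^sub>m k - Y * X \<in> carrier_mat k k" using YX by (intro minus_carrier_mat) auto
  have "det M = det (1\<^sub>m N - X * Y)"
    unfolding e1[symmetric]
    apply (subst det_mult[of _ "N+k"])
    using X Y XY
      apply (auto simp: det_four_block_mat_lower_left_zero[OF one_carrier_mat X refl one_carrier_mat] det_four_block_mat_upper_right_zero[OF c1 refl Y one_carrier_mat]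
       det_four_block_mat_lower_left_zero[OF one_carrier_mat X refl c2] det_four_block_mat_upper_right_zero[OF one_carrier_mat refl Y one_carrier_mat])
    done
  moreover have "det M = det (1\<^sub>m k - Y * X)"
    unfolding e2[symmetric]
    apply (subst det_mult[of _ "N+k"])
    using X Y YX
      apply (auto simp: det_four_block_mat_lower_left_zero[OF one_carrier_mat X refl one_carrier_mat] det_four_block_mat_upper_right_zero[OF c1 refl Y one_carrier_mat]
       det_four_block_mat_lower_left_zero[OF one_carrier_mat X refl c2] det_four_block_mat_upper_right_zero[OF one_carrier_mat refl Y one_carrier_mat])
    done
  ultimately show ?thesis by simp
qed

lemma block_charpoly:
  fixes A :: "real mat"
  assumes A: "A \<in> carrier_mat N N"
  and p: "\<forall>i<N. p i < k"
  and off: "\<forall>i<N. \<forall>j<N. i \<noteq> j \<longrightarrow> A $$ (i,j) = K (p i) (p j)"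
  and dg: "\<forall>i<N. A $$ (i,i) = K (p i) (p i) - \<alpha> (p i)"
  and x: "\<forall>t<k. x + \<alpha> t \<noteq> 0"
  shows "poly (char_poly A) x = (\<Prod>i<N. x + \<alpha> (p i)) *
     det (mat k k (\<lambda>(s,t). (if s = t then 1 else 0) - K s t * real (card {i. i < N \<and> p i = t}) / (x + \<alpha> t)))"
proof -
  define D where "D = mat N N (\<lambda>(i,j). if i = j then x + \<alpha> (p i) else 0)"
  define X where "X = mat N k (\<lambda>(i,t). if p i = t then 1 / (x + \<alpha> t) else 0)"
  define Y where "Y = mat k N (\<lambda>(s,j). K s (p j))"
  have Xc: "X \<in> carrier_mat N k" and Yc: "Y \<in> carrier_mat k N" and Dc: "D \<in> carrier_mat N N"
    unfolding X_def Y_def D_def by auto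
  have XY: "(X * Y) $$ (i,j) = K (p i) (p j) / (x + \<alpha> (p i))" if "i < N" "j < N" for i j
  proof -
    have "(X * Y) $$ (i,j) = (\<Sum>t\<in>{0..<k}. (if p i = t then 1 / (x + \<alpha> t) else 0) * K t (p j))"
      using that Xc Yc by (simp add: scalar_prod_def X_def Y_def)
    also have "\<dots> = (\<Sum>t\<in>{0..<k}. if p i = t then K t (p j) / (x + \<alpha> t) else 0)"
      by (rule sum.cong) auto
    also have "\<dots> = K (p i) (p j) / (x + \<alpha> (p i))"
      using p that by (simp add: sum.delta)
    finally show ?thesis .
  qed
  have YX: "Y * X = mat k k (\<lambda>(s,t). K s t * real (card {i. i < N \<and> p i = t}) / (x + \<alpha> t))"
  proof (rule eq_matI)
    fix s t assume st: "s < dim_row (mat k k (\<lambda>(s,t). K s t * real (card {i. i < N \<and> p i = t}) / (x + \<alpha> t)))"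
      "t < dim_col (mat k k (\<lambda>(s,t). K s t * real (card {i. i < N \<and> p i = t}) / (x + \<alpha> t)))"
    have "(Y * X) $$ (s,t) = (\<Sum>i\<in>{0..<N}. K s (p i) * (if p i = t then 1 / (x + \<alpha> t) else 0))"
      using st Xc Yc by (simp add: scalar_prod_def X_def Y_def)
    also have "\<dots> = (\<Sum>i\<in>{0..<N}. if p i = t then K s t / (x + \<alpha> t) else 0)"
      by (rule sum.cong) auto
    also have "\<dots> = (\<Sum>i\<in>{i\<in>{0..<N}. p i = t}. K s t / (x + \<alpha> t))"
      by (rule sum.inter_filter[symmetric]) auto
    also have "{i\<in>{0..<N}. p i = t} = {i. i < N \<and> p i = t}" by auto
    also have "(\<Sum>i\<in>{i. i < N \<and> p i = t}. K s t / (x + \<alpha> t)) = K s t * real (card {i. i < N \<and> p i = t}) / (x + \<alpha> t)"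
      by simp
    finally show "(Y * X) $$ (s,t) = mat k k (\<lambda>(s,t). K s t * real (card {i. i < N \<and> p i = t}) / (x + \<alpha> t)) $$ (s,t)"
      using st by simp
  qed (use Xc Yc in auto)
  have eq: "- (char_matrix A x) = D * (1\<^sub>m N - X * Y)"
  proof (rule eq_matI)
    fix i j assume ij: "i < dim_row (D * (1\<^sub>m N - X * Y))" "j < dim_col (D * (1\<^sub>m N - X * Y))"
    then have i: "i < N" and j: "j < N" using Dc Xc Yc by auto
    have "(D * (1\<^sub>m N - X * Y)) $$ (i,j) = (\<Sum>l\<in>{0..<N}. (if i = l then x + \<alpha> (p i) else 0) * (1\<^sub>m N - X * Y) $$ (l, j))"
      using i j Dc Xc Yc by (simp add: scalar_prod_def D_def)
    also have "\<dots> = (\<Sum>l\<in>{0..<N}. if i = l then (x + \<alpha> (p i)) * (1\<^sub>m N - X * Y) $$ (l, j) else 0)"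
      by (rule sum.cong) auto
    also have "\<dots> = (x + \<alpha> (p i)) * (1\<^sub>m N - X * Y) $$ (i, j)"
      using i by (simp add: sum.delta)
    also have "\<dots> = (x + \<alpha> (p i)) * ((if i = j then 1 else 0) - K (p i) (p j) / (x + \<alpha> (p i)))"
      using i j Xc Yc XY by simp
    also have "\<dots> = (if i = j then x + \<alpha> (p i) else 0) - K (p i) (p j)"
      using x p i by (simp add: field_simps)
    also have "\<dots> = (- (char_matrix A x)) $$ (i,j)"
      using i j A off dg by (auto simp: char_matrix_def)
    finally show "(- (char_matrix A x)) $$ (i,j) = (D * (1\<^sub>m N - X * Y)) $$ (i,j)" by simp
  qed (use A Dc Xc Yc in \<open>auto simp: char_matrix_def\<close>)
  have dD: "det D = (\<Prod>i<N. x + \<alpha> (p i))"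
    apply (subst det_upper_triangular[OF _ Dc])
     apply (force simp: upper_triangular_def D_def)
    apply (simp add: prod_list_diag_prod D_def atLeast0LessThan)
    done
  have "poly (char_poly A) x = det (D * (1\<^sub>m N - X * Y))"
    using char_poly_matrix[OF A] eq by simp
  also have "\<dots> = det D * det (1\<^sub>m N - X * Y)"
    by (rule det_mult[OF Dc]) (use Xc Yc in auto)
  also have "det (1\<^sub>m N - X * Y) = det (1\<^sub>m k - Y * X)"
    by (rule sylvester_det[OF Xc Yc])
  also have "1\<^sub>m k - Y * X = mat k k (\<lambda>(s,t). (if s = t then 1 else 0) - K s t * real (card {i. i < N \<and> p i = t}) / (x + \<alpha> t))"
    unfolding YX by (rule eq_matI) auto
  finally show ?thesis using dD by simp
qed



lemma quat_fst_int:
  assumes "n > 0" "k \<le> 2*n" "j < 2"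
  shows "int (fst (quat_mult n (i,j) (k,l))) =
     (int i + (if j = 0 then int k else - int k) + (if j = 1 \<and> l = 1 then int n else 0)) mod (2 * int n)"
proof (cases "j = 0")
  case True
  then show ?thesis by (simp add: quat_mult_def zmod_int)
next
  case False
  then have j: "j = 1" using assms by auto
  have "int (fst (quat_mult n (i,j) (k,l))) = int (i + (2 * n - k) + (if l = 1 then n else 0)) mod (2 * int n)"
    using j by (simp add: quat_mult_def zmod_int)
  also have "int (i + (2 * n - k) + (if l = 1 then n else 0)) = (int i - int k + (if l = 1 then int n else 0)) + 2 * int n"
    using assms by (auto simp: of_nat_diff)
  also have "(int i - int k + (if l = 1 then int n else 0) + 2 * int n) mod (2 * int n) = (int i - int k + (if l = 1 then int n else 0)) mod (2 * int n)"
    by (rule mod_add_self2)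
  finally show ?thesis using j by simp
qed

lemma quat_snd: "snd (quat_mult n (i,j) (k,l)) = (j + l) mod 2"
  by (simp add: quat_mult_def)

lemma quat_closed: "n > 0 \<Longrightarrow> x \<in> {..<2*n} \<times> {..<2} \<Longrightarrow> y \<in> {..<2*n} \<times> {..<2} \<Longrightarrow> quat_mult n x y \<in> {..<2*n} \<times> {..<2}"
  by (cases x; cases y) (auto simp: quat_mult_def)

lemma quat_assoc:
  assumes n: "n > 0" and x: "x \<in> {..<2*n} \<times> {..<2}" and y: "y \<in> {..<2*n} \<times> {..<2}" and z: "z \<in> {..<2*n} \<times> {..<2}"
  shows "quat_mult n (quat_mult n x y) z = quat_mult n x (quat_mult n y z)"
proof -
  obtain i j where xe: "x = (i,j)" by force
  obtain k l where ye: "y = (k,l)" by force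
  obtain r s where ze: "z = (r,s)" by force
  obtain a b where xy: "quat_mult n x y = (a,b)" by force
  obtain c d where yz: "quat_mult n y z = (c,d)" by force
  have xyc: "(a,b) \<in> {..<2*n} \<times> {..<2}" using quat_closed[OF n x y] xy by simp
  have yzc: "(c,d) \<in> {..<2*n} \<times> {..<2}" using quat_closed[OF n y z] yz by simp
  have ia: "int a = (int i + (if j = 0 then int k else - int k) + (if j = 1 \<and> l = 1 then int n else 0)) mod (2 * int n)"
    using quat_fst_int[OF n, of k j i l] x y xy xe ye by auto
  have ic: "int c = (int k + (if l = 0 then int r else - int r) + (if l = 1 \<and> s = 1 then int n else 0)) mod (2 * int n)"
    using quat_fst_int[OF n, of r l k s] y z yz ye ze by auto
  have b: "b = (j + l) mod 2" using xy xe ye quat_snd by (metis snd_conv)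
  have d: "d = (l + s) mod 2" using yz ze ye quat_snd by (metis snd_conv)
  have j2: "j < 2" "l < 2" "s < 2" using x y z xe ye ze by auto
  have L: "int (fst (quat_mult n (a,b) (r,s))) = (int a + (if b = 0 then int r else - int r) + (if b = 1 \<and> s = 1 then int n else 0)) mod (2 * int n)"
    using quat_fst_int[OF n, of r b a s] z ze xyc by auto
  have R: "int (fst (quat_mult n (i,j) (c,d))) = (int i + (if j = 0 then int c else - int c) + (if j = 1 \<and> d = 1 then int n else 0)) mod (2 * int n)"
    using quat_fst_int[OF n, of c j i d] yzc x xe by auto
  have key: "(int a + (if b = 0 then int r else - int r) + (if b = 1 \<and> s = 1 then int n else 0)) mod (2 * int n) = (int i + (if j = 0 then int c else - int c) + (if j = 1 \<and> d = 1 then int n else 0)) mod (2 * int n)"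
    unfolding ia ic b d using j2
    apply (cases j; cases l; cases s)
    apply (simp_all add: mod_simps)
    apply (simp_all add: algebra_simps mod_simps)
    apply (smt (verit, best) dvd_minus_mod mod_eq_dvd_iff)
    apply (smt (verit, best) dvd_minus_mod mod_eq_dvd_iff)
    apply (smt (verit, ccfv_threshold) minus_mod_self2)
    done
  have "int (fst (quat_mult n (a,b) (r,s))) = int (fst (quat_mult n (i,j) (c,d)))"
    using L R key by simp
  moreover have "snd (quat_mult n (a,b) (r,s)) = snd (quat_mult n (i,j) (c,d))"
    unfolding quat_snd b d by presburger
  ultimately have "quat_mult n (a,b) (r,s) = quat_mult n (i,j) (c,d)" by (simp add: prod_eq_iff)
  then show ?thesis using xy yz xe ye ze by simp
qed

lemma quat_group:
  assumes n: "n > 0"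
  shows "group (Quat n)"
proof (rule groupI)
  show "\<And>x y. x \<in> carrier (Quat n) \<Longrightarrow> y \<in> carrier (Quat n) \<Longrightarrow> x \<otimes>\<^bsub>Quat n\<^esub> y \<in> carrier (Quat n)"
    using quat_closed[OF n] by (simp add: Quat_def)
  show "\<one>\<^bsub>Quat n\<^esub> \<in> carrier (Quat n)" using n by (simp add: Quat_def)
  show "\<And>x y z. x \<in> carrier (Quat n) \<Longrightarrow> y \<in> carrier (Quat n) \<Longrightarrow> z \<in> carrier (Quat n) \<Longrightarrow>
      x \<otimes>\<^bsub>Quat n\<^esub> y \<otimes>\<^bsub>Quat n\<^esub> z = x \<otimes>\<^bsub>Quat n\<^esub> (y \<otimes>\<^bsub>Quat n\<^esub> z)"
    using quat_assoc[OF n] by (simp add: Quat_def)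
  show "\<And>x. x \<in> carrier (Quat n) \<Longrightarrow> \<one>\<^bsub>Quat n\<^esub> \<otimes>\<^bsub>Quat n\<^esub> x = x"
    by (auto simp: Quat_def quat_mult_def)
  show "\<And>x. x \<in> carrier (Quat n) \<Longrightarrow> \<exists>y\<in>carrier (Quat n). y \<otimes>\<^bsub>Quat n\<^esub> x = \<one>\<^bsub>Quat n\<^esub>"
  proof -
    fix x assume x: "x \<in> carrier (Quat n)"
    obtain i j where xe: "x = (i,j)" and i: "i < 2*n" and j: "j < 2" using x by (auto simp: Quat_def)
    show "\<exists>y\<in>carrier (Quat n). y \<otimes>\<^bsub>Quat n\<^esub> x = \<one>\<^bsub>Quat n\<^esub>"
    proof (cases "j = 0")
      case True
      have "((2 * n - i) mod (2 * n) + i) mod (2 * n) = ((2 * n - i) + i) mod (2*n)"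
        by (metis mod_add_left_eq)
      also have "(2 * n - i) + i = 1 * (2*n)" using i by simp
      finally have e: "((2 * n - i) mod (2 * n) + i) mod (2 * n) = 0" by simp
      show ?thesis
        apply (rule bexI[of _ "((2*n - i) mod (2*n), 0)"])
        using True i n xe e by (auto simp: Quat_def quat_mult_def)
    next
      case False
      then have j1: "j = 1" using j by auto
      have "((i + n) mod (2 * n) + (2 * n - i) + n) mod (2 * n) = ((i + n) + (2 * n - i) + n) mod (2*n)"
        by (metis mod_add_left_eq)
      also have "(i + n) + (2 * n - i) + n = 2 * (2*n)" using i by simp
      finally have e: "((i + n) mod (2 * n) + (2 * n - i) + n) mod (2 * n) = 0" by simp
      show ?thesis
        apply (rule bexI[of _ "((i + n) mod (2*n), 1)"])
        using j1 i n xe e by (auto simp: Quat_def quat_mult_def)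
    qed
  qed
qed



lemma quat_carrier: "carrier (Quat n) = {..<2*n} \<times> {..<2}"
  by (simp add: Quat_def)
lemma quat_mult_eq: "g \<otimes>\<^bsub>Quat n\<^esub> h = quat_mult n g h"
  by (simp add: Quat_def)
lemma quat_one: "\<one>\<^bsub>Quat n\<^esub> = (0,0)"
  by (simp add: Quat_def)

lemma pow_cyc:
  assumes "n > 0"
  shows "(i,0) [^]\<^bsub>Quat n\<^esub> (m::nat) = (i * m mod (2*n), 0)"
proof (induction m)
  case 0 then show ?case by (simp add: quat_one)
next
  case (Suc m)
  then show ?case
    by (simp add: quat_mult_eq quat_mult_def mod_add_left_eq algebra_simps)
qed

lemma pow_b:
  assumes "n > 0" "i < 2*n"
  shows "(i,1) [^]\<^bsub>Quat n\<^esub> (m::nat) =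
     (if even m then ((m div 2) * n mod (2*n), 0) else ((i + (m div 2) * n) mod (2*n), 1))"
proof (induction m)
  case 0 then show ?case by (simp add: quat_one)
next
  case (Suc m)
  show ?case
  proof (cases "even m")
    case True
    have e: "(i + n*(q mod 2)) mod (n*2) = (i + n*q) mod (n*2)" for q
      by (metis mod_add_right_eq mult_mod_right)
    show ?thesis using Suc assms True
      by (simp add: quat_mult_eq quat_mult_def mod_add_left_eq algebra_simps e)
  next
    case False
    then obtain c where m: "m = 2*c+1" by (metis oddE)
    have "((i + c * n) mod (2 * n) + (2 * n - i) + n) mod (2 * n) = ((i + c*n) + (2*n - i) + n) mod (2*n)"
      by (metis mod_add_left_eq)
    also have "(i + c*n) + (2*n - i) + n = (c+1)*n + 1 * (2*n)" using assms by (simp add: algebra_simps)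
    also have "((c+1)*n + 1 * (2*n)) mod (2*n) = (c+1)*n mod (2*n)" by (metis mod_mult_self1)
    finally show ?thesis using Suc assms m
      by (simp add: quat_mult_eq quat_mult_def algebra_simps)
  qed
qed

lemma ord_char:
  assumes G: "group G" and x: "x \<in> carrier G"
  and d: "\<forall>m::nat. x [^]\<^bsub>G\<^esub> m = \<one>\<^bsub>G\<^esub> \<longleftrightarrow> d dvd m"
  shows "group.ord G x = d"
proof -
  have "\<forall>m::nat. group.ord G x dvd m \<longleftrightarrow> d dvd m"
    using group.pow_eq_id[OF G x] d by simp
  then show ?thesis by (meson dvd_antisym dvd_refl)
qed

lemma ord_b:
  assumes n: "n \<ge> 2" and i: "i < 2*n"
  shows "group.ord (Quat n) (i,1) = 4"
proof (rule ord_char[OF quat_group])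
  show "(i,1) \<in> carrier (Quat n)" using i by (simp add: quat_carrier)
  show "\<forall>m::nat. (i,1) [^]\<^bsub>Quat n\<^esub> m = \<one>\<^bsub>Quat n\<^esub> \<longleftrightarrow> 4 dvd m"
  proof
    fix m :: nat
    have e: "(m div 2) * n mod (2*n) = 0 \<longleftrightarrow> 2 dvd (m div 2)"
      using n by auto
    have "(i,1) [^]\<^bsub>Quat n\<^esub> m = \<one>\<^bsub>Quat n\<^esub> \<longleftrightarrow> even m \<and> 2 dvd (m div 2)"
      using n i e by (subst pow_b) (auto simp: quat_one)
    also have "\<dots> \<longleftrightarrow> 4 dvd m" by presburger
    finally show "(i,1) [^]\<^bsub>Quat n\<^esub> m = \<one>\<^bsub>Quat n\<^esub> \<longleftrightarrow> 4 dvd m" .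
  qed
qed (use n in auto)

lemma ord_cyc_iff:
  assumes n: "n \<ge> 2" and k: "k < 2*n"
  shows "(k,0) [^]\<^bsub>Quat n\<^esub> (m::nat) = \<one>\<^bsub>Quat n\<^esub> \<longleftrightarrow> 2*n dvd k*m"
  using n by (auto simp: pow_cyc quat_one)

lemma ord_e:
  assumes n: "n \<ge> 2"
  shows "group.ord (Quat n) (0,0) = 1"
  by (rule ord_char[OF quat_group]) (use n in \<open>auto simp: quat_carrier ord_cyc_iff\<close>)

lemma ord_n:
  assumes n: "n \<ge> 2"
  shows "group.ord (Quat n) (n,0) = 2"
proof (rule ord_char[OF quat_group])
  show "\<forall>m::nat. (n,0) [^]\<^bsub>Quat n\<^esub> m = \<one>\<^bsub>Quat n\<^esub> \<longleftrightarrow> 2 dvd m"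
    using n by (auto simp: ord_cyc_iff mult.commute[of 2 n])
qed (use n in \<open>auto simp: quat_carrier\<close>)

lemma ord_half:
  assumes n: "n \<ge> 2" and ev: "even n"
  shows "group.ord (Quat n) (n div 2,0) = 4"
proof (rule ord_char[OF quat_group])
  obtain c where c: "n = 2*c" using ev by blast
  have c0: "c > 0" using n c by simp
  show "\<forall>m::nat. (n div 2,0) [^]\<^bsub>Quat n\<^esub> m = \<one>\<^bsub>Quat n\<^esub> \<longleftrightarrow> 4 dvd m"
  proof
    fix m :: nat
    have "2 * n dvd n div 2 * m \<longleftrightarrow> c * 4 dvd c * m" using c by (simp add: mult.commute mult.left_commute)
    also have "\<dots> \<longleftrightarrow> 4 dvd m" using c0 by simp
    finally show "(n div 2,0) [^]\<^bsub>Quat n\<^esub> m = \<one>\<^bsub>Quat n\<^esub> \<longleftrightarrow> 4 dvd m"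
      using ord_cyc_iff[OF n, of "n div 2" m] n by simp
  qed
qed (use n in \<open>auto simp: quat_carrier\<close>)

lemma ord_cyc_odd:
  assumes n: "n \<ge> 2" and od: "odd n" and k: "k < 2*n" "k \<noteq> 0" "k \<noteq> n"
  shows "group.ord (Quat n) (k,0) \<notin> {1,2,4}"
proof
  assume o: "group.ord (Quat n) (k,0) \<in> {1,2,4}"
  have kc: "(k,0) \<in> carrier (Quat n)" using k by (simp add: quat_carrier)
  have "group.ord (Quat n) (k,0) dvd 4" using o by auto
  then have "(k,0) [^]\<^bsub>Quat n\<^esub> (4::nat) = \<one>\<^bsub>Quat n\<^esub>"
    using group.pow_eq_id[OF quat_group kc] n by simp
  then have "2*n dvd k*4" using ord_cyc_iff[OF n k(1)] by simp
  then have "n dvd 2*k" by (simp add: mult.commute[of k 4] mult.commute[of 2 n])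
  then have "n dvd k" using od n
    by (smt (verit, ccfv_threshold) dvd_mult_div_cancel dvd_mult_imp_div
    even_mult_iff even_numeral nat_mult_dvd_cancel_disj zero_neq_numeral)
  then show False using k n by force
qed

lemma osc_adj_sym1: assumes "osc_adj G g h" shows "osc_adj G h g"
proof -
  have c: "g \<in> carrier G" "h \<in> carrier G" "h \<noteq> g" using assms by (auto simp: osc_adj_def)
  show ?thesis
  proof (cases "group.ord G g = group.ord G h")
    case True then show ?thesis using c by (simp add: osc_adj_def)
  next
    case False
    then obtain g' h' where w: "g' \<in> carrier G" "h' \<in> carrier G" "g' \<noteq> h'"
      "group.ord G g' = group.ord G g" "group.ord G h' = group.ord G h" "g' \<otimes>\<^bsub>G\<^esub> h' = h' \<otimes>\<^bsub>G\<^esub> g'"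
      using assms unfolding osc_adj_def by blast
    have "\<exists>a\<in>carrier G. \<exists>b\<in>carrier G. a \<noteq> b \<and> group.ord G a = group.ord G h \<and> group.ord G b = group.ord G g \<and> a \<otimes>\<^bsub>G\<^esub> b = b \<otimes>\<^bsub>G\<^esub> a"
      by (rule bexI[OF bexI[OF _ w(1)] w(2)]) (use w in auto)
    then show ?thesis using c unfolding osc_adj_def by blast
  qed
qed
lemma osc_adj_sym: "osc_adj G g h \<longleftrightarrow> osc_adj G h g"
  using osc_adj_sym1 by metis
lemma cyc_comm: "quat_mult n (k,0) (l,0) = quat_mult n (l,0) (k,0)"
  by (simp add: quat_mult_def add.commute)

lemma central_comm:
  assumes "n > 0" "k = 0 \<or> k = n" "l < 2*n"
  shows "quat_mult n (k,0) (l,1) = quat_mult n (l,1) (k,0)"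
proof -
  have "(k + l) mod (2*n) = (l + (2*n - k)) mod (2*n)"
    using assms by (auto simp: add.commute)
  then show ?thesis by (simp add: quat_mult_def)
qed

lemma noncomm:
  assumes n: "n > 0" and k: "k < 2*n" and l: "l < 2*n"
    and c: "quat_mult n (k,0) (l,1) = quat_mult n (l,1) (k,0)"
  shows "k = 0 \<or> k = n"
proof -
  have "int (fst (quat_mult n (k,0) (l,1))) = int (fst (quat_mult n (l,1) (k,0)))" using c by simp
  then have "(int k + int l) mod (2 * int n) = (int l - int k) mod (2 * int n)"
    using quat_fst_int[OF n, of l 0 k 1] quat_fst_int[OF n, of k 1 l 0] k l by simp
  then have "2 * int n dvd (int k + int l) - (int l - int k)"
    by (simp add: mod_eq_dvd_iff)
  then have "2 * int n dvd 2 * int k" by simp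
  then have "int n dvd int k" by simp
  then have "n dvd k" by simp
  then show ?thesis using k n by force
qed

definition cls :: "nat \<Rightarrow> nat \<times> nat \<Rightarrow> nat" where
  "cls n g = (if snd g = 1 then 2 else if fst g = 0 \<or> fst g = n then 0 else 1)"

lemma cls_eq0: "cls n (k,j) = 0 \<longleftrightarrow> j \<noteq> 1 \<and> (k = 0 \<or> k = n)"
  by (simp add: cls_def)
lemma cls_eq1: "cls n (k,j) = 1 \<longleftrightarrow> j \<noteq> 1 \<and> k \<noteq> 0 \<and> k \<noteq> n"
  by (simp add: cls_def)
lemma cls_eq2: "cls n (k,j) = 2 \<longleftrightarrow> j = 1"
  by (simp add: cls_def)

lemma ord_cls0:
  assumes n: "n \<ge> 2" and g: "g \<in> carrier (Quat n)" and c: "cls n g = 0"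
  shows "group.ord (Quat n) g \<in> {1,2}"
proof -
  obtain k j where ge: "g = (k,j)" by force
  have j: "j < 2" using g ge by (simp add: quat_carrier)
  have "j \<noteq> 1" "k = 0 \<or> k = n" using c ge cls_eq0 by auto
  then have "j = 0" "k = 0 \<or> k = n" using j by auto
  then show ?thesis using ge ord_e[OF n] ord_n[OF n] by auto
qed

lemma ord_cls2:
  assumes n: "n \<ge> 2" and g: "g \<in> carrier (Quat n)" and c: "cls n g = 2"
  shows "group.ord (Quat n) g = 4"
proof -
  obtain k j where ge: "g = (k,j)" by force
  have k: "k < 2*n" using g ge by (simp add: quat_carrier)
  have "j = 1" using c ge cls_eq2 by auto
  then show ?thesis using ge ord_b[OF n k] by simp
qed

lemma ord_cls1:
  assumes n: "n \<ge> 2" and od: "odd n" and g: "g \<in> carrier (Quat n)" and c: "cls n g = 1"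
  shows "group.ord (Quat n) g \<notin> {1,2,4}"
proof -
  obtain k j where ge: "g = (k,j)" by force
  have kj: "k < 2*n" "j < 2" using g ge by (auto simp: quat_carrier)
  have "j \<noteq> 1" "k \<noteq> 0" "k \<noteq> n" using c ge cls_eq1 by auto
  then have "j = 0" "k \<noteq> 0" "k \<noteq> n" using kj by auto
  then show ?thesis using ge ord_cyc_odd[OF n od kj(1)] by simp
qed

lemma cls_range: "cls n g < 3" by (simp add: cls_def)

lemma adj_odd:
  assumes n: "n \<ge> 2" and od: "odd n" and g: "g \<in> carrier (Quat n)" and h: "h \<in> carrier (Quat n)"
  shows "osc_adj (Quat n) g h \<longleftrightarrow> g \<noteq> h \<and> \<not> (cls n g = 1 \<and> cls n h = 2) \<and> \<not> (cls n g = 2 \<and> cls n h = 1)"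
proof -
  have n0: "n > 0" using n by simp
  have nonadj: "\<not> osc_adj (Quat n) a b" if a: "a \<in> carrier (Quat n)" and b: "b \<in> carrier (Quat n)"
    and ca: "cls n a = 1" and cb: "cls n b = 2" for a b
  proof
    assume adj: "osc_adj (Quat n) a b"
    have oa: "group.ord (Quat n) a \<notin> {1,2,4}" by (rule ord_cls1[OF n od a ca])
    have ob: "group.ord (Quat n) b = 4" by (rule ord_cls2[OF n b cb])
    from adj oa ob obtain a' b' where a': "a' \<in> carrier (Quat n)" and b': "b' \<in> carrier (Quat n)"
      and oa': "group.ord (Quat n) a' = group.ord (Quat n) a" and ob': "group.ord (Quat n) b' = 4"
      and cm: "a' \<otimes>\<^bsub>Quat n\<^esub> b' = b' \<otimes>\<^bsub>Quat n\<^esub> a'"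
      unfolding osc_adj_def by auto
    have ca': "cls n a' = 1"
      using ord_cls0[OF n a'] ord_cls2[OF n a'] oa oa' cls_range[of n a'] by (auto simp: less_Suc_eq numeral_3_eq_3)
    have cb': "cls n b' = 2"
      using ord_cls0[OF n b'] ord_cls1[OF n od b'] ob' cls_range[of n b'] by (auto simp: less_Suc_eq numeral_3_eq_3)
    obtain k j where a'0: "a' = (k,j)" by force
    obtain l t where b'0: "b' = (l,t)" by force
    have a'e: "j = 0" "k \<noteq> 0" "k \<noteq> n" "k < 2*n"
      using ca' a' a'0 cls_eq1[of n k j] by (auto simp: quat_carrier)
    have b'e: "t = 1" "l < 2*n"
      using cb' b' b'0 cls_eq2[of n l t] by (auto simp: quat_carrier)
    have "quat_mult n (k,0) (l,1) = quat_mult n (l,1) (k,0)"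
      using cm a'0 b'0 a'e b'e by (simp add: quat_mult_eq)
    then show False using noncomm[OF n0 a'e(4) b'e(2)] a'e by simp
  qed
  show ?thesis
  proof
    assume adj: "osc_adj (Quat n) g h"
    then have adj': "osc_adj (Quat n) h g" using osc_adj_sym by metis
    have "g \<noteq> h" using adj by (simp add: osc_adj_def)
    moreover have "\<not> (cls n g = 1 \<and> cls n h = 2)" using nonadj[OF g h] adj by blast
    moreover have "\<not> (cls n g = 2 \<and> cls n h = 1)" using nonadj[OF h g] adj' by blast
    ultimately show "g \<noteq> h \<and> \<not> (cls n g = 1 \<and> cls n h = 2) \<and> \<not> (cls n g = 2 \<and> cls n h = 1)" by blast
  next
    assume A: "g \<noteq> h \<and> \<not> (cls n g = 1 \<and> cls n h = 2) \<and> \<not> (cls n g = 2 \<and> cls n h = 1)"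
    obtain k j where ge: "g = (k,j)" "k < 2*n" "j < 2" using g by (auto simp: quat_carrier)
    obtain l s where he: "h = (l,s)" "l < 2*n" "s < 2" using h by (auto simp: quat_carrier)
    have comm: "g \<otimes>\<^bsub>Quat n\<^esub> h = h \<otimes>\<^bsub>Quat n\<^esub> g" if "\<not> (j = 1 \<and> s = 1)"
    proof (cases "j = 0 \<and> s = 0")
      case True then show ?thesis using ge he by (simp add: quat_mult_eq cyc_comm)
    next
      case False
      then have "(j = 0 \<and> s = 1) \<or> (j = 1 \<and> s = 0)" using that ge he by auto
      then show ?thesis
      proof
        assume js: "j = 0 \<and> s = 1"
        then have "k = 0 \<or> k = n" using A ge he cls_eq1[of n k j] cls_eq2[of n l s] by auto
        then show ?thesis using central_comm[OF n0 _ he(2)] js ge he by (simp add: quat_mult_eq)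
      next
        assume js: "j = 1 \<and> s = 0"
        then have "l = 0 \<or> l = n" using A ge he cls_eq1[of n l s] cls_eq2[of n k j] by auto
        then show ?thesis using central_comm[OF n0 _ ge(2)] js ge he by (simp add: quat_mult_eq)
      qed
    qed
    show "osc_adj (Quat n) g h"
    proof (cases "j = 1 \<and> s = 1")
      case True
      then have "group.ord (Quat n) g = group.ord (Quat n) h"
        using ge he ord_b[OF n] by simp
      then show ?thesis using A g h by (simp add: osc_adj_def)
    next
      case False
      have c: "g \<otimes>\<^bsub>Quat n\<^esub> h = h \<otimes>\<^bsub>Quat n\<^esub> g" by (rule comm[OF False])
      have "\<exists>g'\<in>carrier (Quat n). \<exists>h'\<in>carrier (Quat n). g' \<noteq> h' \<and>
          group.ord (Quat n) g' = group.ord (Quat n) g \<and> group.ord (Quat n) h' = group.ord (Quat n) h \<and>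
          g' \<otimes>\<^bsub>Quat n\<^esub> h' = h' \<otimes>\<^bsub>Quat n\<^esub> g'"
        by (rule bexI[OF bexI[OF _ h] g]) (use A c in simp)
      then show ?thesis using A g h unfolding osc_adj_def by blast
    qed
  qed
qed

lemma adj_even:
  assumes n: "n \<ge> 2" and ev: "even n" and g: "g \<in> carrier (Quat n)" and h: "h \<in> carrier (Quat n)"
  shows "osc_adj (Quat n) g h \<longleftrightarrow> g \<noteq> h"
proof
  assume "osc_adj (Quat n) g h" then show "g \<noteq> h" by (simp add: osc_adj_def)
next
  assume gh: "g \<noteq> h"
  have n0: "n > 0" using n by simp
  define z where "z = (n div 2, 0::nat)"
  have zc: "z \<in> carrier (Quat n)" using n by (simp add: z_def quat_carrier)
  have oz: "group.ord (Quat n) z = 4" using ord_half[OF n ev] by (simp add: z_def)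
  obtain k j where ge: "g = (k,j)" "k < 2*n" "j < 2" using g by (auto simp: quat_carrier)
  obtain l s where he: "h = (l,s)" "l < 2*n" "s < 2" using h by (auto simp: quat_carrier)
  consider "j = 0 \<and> s = 0" | "j = 1 \<and> s = 1" | "j = 0 \<and> s = 1" | "j = 1 \<and> s = 0" using ge he by linarith
  then show "osc_adj (Quat n) g h"
  proof cases
    case 1
    then have "g \<otimes>\<^bsub>Quat n\<^esub> h = h \<otimes>\<^bsub>Quat n\<^esub> g" using ge he by (simp add: quat_mult_eq cyc_comm)
    then show ?thesis using g h gh unfolding osc_adj_def by blast
  next
    case 2
    then show ?thesis using g h gh ge he ord_b[OF n] by (simp add: osc_adj_def)
  next
    case 3
    have ohh: "group.ord (Quat n) h = 4" using 3 he ord_b[OF n] by simp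
    show ?thesis
    proof (cases "g = z")
      case True then show ?thesis using oz ohh g h gh by (simp add: osc_adj_def)
    next
      case False
      have "g \<otimes>\<^bsub>Quat n\<^esub> z = z \<otimes>\<^bsub>Quat n\<^esub> g" using 3 ge by (simp add: z_def quat_mult_eq cyc_comm)
      then show ?thesis using g h gh zc oz ohh False unfolding osc_adj_def by metis
    qed
  next
    case 4
    have ogg: "group.ord (Quat n) g = 4" using 4 ge ord_b[OF n] by simp
    show ?thesis
    proof (cases "h = z")
      case True then show ?thesis using oz ogg g h gh by (simp add: osc_adj_def)
    next
      case False
      have "z \<otimes>\<^bsub>Quat n\<^esub> h = h \<otimes>\<^bsub>Quat n\<^esub> z" using 4 he by (simp add: z_def quat_mult_eq cyc_comm)
      then show ?thesis using g h gh zc oz ogg False unfolding osc_adj_def by metis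
    qed
  qed
qed



lemma det2: assumes A: "(A :: 'a :: comm_ring_1 mat) \<in> carrier_mat 2 2"
  shows "det A = A $$ (0,0) * A $$ (1,1) - A $$ (0,1) * A $$ (1,0)"
proof -
  have "det A = (\<Sum>i<2. A $$ (i,0) * cofactor A i 0)"
    by (rule laplace_expansion_column[OF A]) simp
  also have "\<dots> = A $$ (0,0) * A $$ (1,1) - A $$ (0,1) * A $$ (1,0)"
    using A by (simp add: numeral_2_eq_2 cofactor_def det_single mat_delete_def mat_delete_carrier)
  finally show ?thesis .
qed

lemma det2': "det (mat (Suc (Suc 0)) (Suc (Suc 0)) g) = g (0,0) * g (1,1) - g (0,1) * g (1,0)"
  using det2[of "mat 2 2 g"] by (simp add: numeral_2_eq_2)

lemma det3: "det (mat 3 3 f) = f(0,0)*f(1,1)*f(2,2) + f(0,1)*f(1,2)*f(2,0) + f(0,2)*f(1,0)*f(2,1)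
   - f(0,2)*f(1,1)*f(2,0) - f(0,0)*f(1,2)*f(2,1) - f(0,1)*f(1,0)*f(2,2)"
proof -
  have A: "mat 3 3 f \<in> carrier_mat 3 3" by simp
  have "det (mat 3 3 f) = (\<Sum>i<3. mat 3 3 f $$ (i,0) * cofactor (mat 3 3 f) i 0)"
    by (rule laplace_expansion_column[OF A]) simp
  also have "\<dots> = f(0,0)*f(1,1)*f(2,2) + f(0,1)*f(1,2)*f(2,0) + f(0,2)*f(1,0)*f(2,1)
   - f(0,2)*f(1,1)*f(2,0) - f(0,0)*f(1,2)*f(2,1) - f(0,1)*f(1,0)*f(2,2)"
    by (simp add: numeral_3_eq_3 numeral_2_eq_2 cofactor_def det2' mat_delete_def algebra_simps)
  finally show ?thesis .
qed



lemma card_carrier: "card (carrier (Quat n)) = 4 * n"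
  by (simp add: quat_carrier card_cartesian_product)

lemma fin_carrier: "finite (carrier (Quat n))"
  by (simp add: quat_carrier)

lemma cls_eq1': "cls n (k,j) = Suc 0 \<longleftrightarrow> j \<noteq> 1 \<and> k \<noteq> 0 \<and> k \<noteq> n"
  using cls_eq1 by simp

lemma C0_eq: "{g \<in> carrier (Quat n). cls n g = 0} = {(0,0),(n,0)}" if "n > 0"
proof (rule Set.set_eqI)
  fix x :: "nat \<times> nat"
  obtain k j where x: "x = (k,j)" by force
  show "x \<in> {g \<in> carrier (Quat n). cls n g = 0} \<longleftrightarrow> x \<in> {(0,0),(n,0)}"
    unfolding x quat_carrier using that cls_eq0[of n k j] by auto
qed

lemma C1_eq: "{g \<in> carrier (Quat n). cls n g = 1} = ({..<2*n} - {0,n}) \<times> {0}"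
proof (rule Set.set_eqI)
  fix x :: "nat \<times> nat"
  obtain k j where x: "x = (k,j)" by force
  show "x \<in> {g \<in> carrier (Quat n). cls n g = 1} \<longleftrightarrow> x \<in> ({..<2*n} - {0,n}) \<times> {0}"
    unfolding x quat_carrier using cls_eq1[of n k j] by auto
qed

lemma C2_eq: "{g \<in> carrier (Quat n). cls n g = 2} = {..<2*n} \<times> {1}"
proof (rule Set.set_eqI)
  fix x :: "nat \<times> nat"
  obtain k j where x: "x = (k,j)" by force
  show "x \<in> {g \<in> carrier (Quat n). cls n g = 2} \<longleftrightarrow> x \<in> {..<2*n} \<times> {1}"
    unfolding x quat_carrier using cls_eq2[of n k j] by auto
qed

lemma card_C0: "n > 0 \<Longrightarrow> card {g \<in> carrier (Quat n). cls n g = 0} = 2"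
  by (subst C0_eq) auto

lemma card_C1: "n > 0 \<Longrightarrow> card {g \<in> carrier (Quat n). cls n g = 1} = 2*n - 2"
  unfolding C1_eq by (simp add: card_cartesian_product card_Diff_subset)

lemma card_C2: "card {g \<in> carrier (Quat n). cls n g = 2} = 2*n"
  unfolding C2_eq by (simp add: card_cartesian_product)

definition degc :: "nat \<Rightarrow> nat \<Rightarrow> nat" where
  "degc n t = (if t = 0 then 4*n - 1 else if t = 1 then 2*n - 1 else 2*n + 1)"

lemma deg_odd:
  assumes n: "n \<ge> 2" and od: "odd n" and g: "g \<in> carrier (Quat n)"
  shows "osc_deg (Quat n) g = degc n (cls n g)"
proof -
  have S: "{h \<in> carrier (Quat n). osc_adj (Quat n) g h} =
     {h \<in> carrier (Quat n). h \<noteq> g \<and> \<not> (cls n g = 1 \<and> cls n h = 2) \<and> \<not> (cls n g = 2 \<and> cls n h = 1)}"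
    using adj_odd[OF n od g] by auto
  have r: "cls n g < 3" by (rule cls_range)
  consider "cls n g = 0" | "cls n g = 1" | "cls n g = 2" using r by linarith
  then show ?thesis
  proof cases
    case 1
    then have "{h \<in> carrier (Quat n). osc_adj (Quat n) g h} = carrier (Quat n) - {g}" unfolding S by auto
    then show ?thesis using 1 g card_carrier[of n] fin_carrier[of n] by (simp add: osc_deg_def degc_def)
  next
    case 2
    have "{h \<in> carrier (Quat n). osc_adj (Quat n) g h} = ({..<2*n} \<times> {0}) - {g}"
    proof (rule Set.set_eqI)
      fix x :: "nat \<times> nat"
      obtain k j where x: "x = (k,j)" by force
      show "x \<in> {h \<in> carrier (Quat n). osc_adj (Quat n) g h} \<longleftrightarrow> x \<in> ({..<2*n} \<times> {0}) - {g}"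
      proof -
        have "x \<in> {h \<in> carrier (Quat n). osc_adj (Quat n) g h} \<longleftrightarrow> x \<in> carrier (Quat n) \<and> x \<noteq> g \<and> cls n x \<noteq> 2"
          unfolding S using 2 by auto
        then show ?thesis unfolding x quat_carrier using cls_eq2[of n k j] by auto
      qed
    qed
    moreover have "g \<in> {..<2*n} \<times> {0}"
    proof -
      obtain k j where x: "g = (k,j)" by force
      show ?thesis using g 2 cls_eq1[of n k j] unfolding x quat_carrier by auto
    qed
    ultimately show ?thesis using 2 by (simp add: osc_deg_def degc_def card_cartesian_product)
  next
    case 3
    have "{h \<in> carrier (Quat n). osc_adj (Quat n) g h} = (carrier (Quat n) - {h \<in> carrier (Quat n). cls n h = 1}) - {g}"
      unfolding S using 3 by auto
    moreover have "card ((carrier (Quat n) - {h \<in> carrier (Quat n). cls n h = 1}) - {g}) = 2*n + 1"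
    proof -
      have "card (carrier (Quat n) - {h \<in> carrier (Quat n). cls n h = 1}) = 4*n - (2*n - 2)"
        using card_C1[of n] n card_carrier[of n] fin_carrier[of n] by (simp add: card_Diff_subset)
      moreover have "g \<in> carrier (Quat n) - {h \<in> carrier (Quat n). cls n h = 1}" using 3 g by auto
      ultimately show ?thesis using n fin_carrier[of n] by simp
    qed
    ultimately show ?thesis using 3 by (simp add: osc_deg_def degc_def)
  qed
qed

lemma deg_even:
  assumes n: "n \<ge> 2" and ev: "even n" and g: "g \<in> carrier (Quat n)"
  shows "osc_deg (Quat n) g = 4*n - 1"
proof -
  have "{h \<in> carrier (Quat n). osc_adj (Quat n) g h} = carrier (Quat n) - {g}"
    using adj_even[OF n ev g] by auto
  then show ?thesis using g card_carrier[of n] fin_carrier[of n] by (simp add: osc_deg_def)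
qed



lemma odd_alg:
  fixes x r s2 P Q a b c :: real
  assumes s2: "s2 * s2 = 2"
    and Q: "Q * Q = (4*r-1)^2 + (2*r-1)^2" and P: "P * P = (4*r-1)^2 + (2*r+1)^2"
    and a: "a = x + (4*r-1)*s2" and b: "b = x + (2*r-1)*s2" and c: "c = x + (2*r+1)*s2"
    and nz: "a \<noteq> 0" "b \<noteq> 0" "c \<noteq> 0"
  shows "a * b * c * (
      (1 - (4*r-1)*s2 * 2 / a) * (1 - (2*r-1)*s2 * (2*r-2) / b) * (1 - (2*r+1)*s2 * (2*r) / c)
    - (- (P * (2*r) / c)) * (1 - (2*r-1)*s2 * (2*r-2) / b) * (- (P * 2 / a))
    - (- (Q * (2*r-2) / b)) * (- (Q * 2 / a)) * (1 - (2*r+1)*s2 * (2*r) / c))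
   = (x - (4*r-1)*s2) * (x - (2*r-1)*(2*r-3)*s2) * (x - (2*r-1)*(2*r+1)*s2)
     - 8*(r-1)*(10*r^2 - 6*r+1) * (x - (2*r-1)*(2*r+1)*s2)
     - 8*r*(10*r^2-2*r+1) * (x - (2*r-1)*(2*r-3)*s2)"
proof -
  have "a * b * c * (
      (1 - (4*r-1)*s2 * 2 / a) * (1 - (2*r-1)*s2 * (2*r-2) / b) * (1 - (2*r+1)*s2 * (2*r) / c)
    - (- (P * (2*r) / c)) * (1 - (2*r-1)*s2 * (2*r-2) / b) * (- (P * 2 / a))
    - (- (Q * (2*r-2) / b)) * (- (Q * 2 / a)) * (1 - (2*r+1)*s2 * (2*r) / c))
   = (a - (4*r-1)*s2 * 2) * (b - (2*r-1)*s2 * (2*r-2)) * (c - (2*r+1)*s2 * (2*r))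
     - (P*P) * (2*r) * 2 * (b - (2*r-1)*s2 * (2*r-2))
     - (Q*Q) * (2*r-2) * 2 * (c - (2*r+1)*s2 * (2*r))"
    using nz by (simp add: field_simps)
  also have "\<dots> = (x - (4*r-1)*s2) * (x - (2*r-1)*(2*r-3)*s2) * (x - (2*r-1)*(2*r+1)*s2)
     - 8*(r-1)*(10*r^2 - 6*r+1) * (x - (2*r-1)*(2*r+1)*s2)
     - 8*r*(10*r^2-2*r+1) * (x - (2*r-1)*(2*r-3)*s2)"
    unfolding P Q a b c by (simp add: algebra_simps power2_eq_square)
  finally show ?thesis .
qed



lemma poly_eq_cofinite:
  fixes p q :: "real poly"
  assumes F: "finite F" and eq: "\<And>x. x \<notin> F \<Longrightarrow> poly p x = poly q x"
  shows "p = q"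
proof (rule ccontr)
  assume "p \<noteq> q"
  then have "p - q \<noteq> 0" by simp
  then have fin: "finite {x. poly (p - q) x = 0}" by (rule poly_roots_finite)
  have "UNIV \<subseteq> F \<union> {x. poly (p - q) x = 0}" using eq by auto
  then have "finite (UNIV :: real set)" using fin F by (meson finite_UnI finite_subset)
  then show False using infinite_UNIV_char_0 by blast
qed

lemma prod_class:
  fixes N k :: nat and p :: "nat \<Rightarrow> nat" and f :: "nat \<Rightarrow> 'a :: comm_monoid_mult"
  assumes "\<forall>i<N. p i < k"
  shows "(\<Prod>i<N. f (p i)) = (\<Prod>t<k. f t ^ card {i. i < N \<and> p i = t})"
proof -
  have "(\<Prod>t<k. prod (\<lambda>i. f (p i)) {i. i \<in> {..<N} \<and> p i = t}) = (\<Prod>i<N. f (p i))"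
    by (rule prod.group) (use assms in auto)
  moreover have "prod (\<lambda>i. f (p i)) {i. i \<in> {..<N} \<and> p i = t} = f t ^ card {i. i < N \<and> p i = t}" for t
  proof -
    have "prod (\<lambda>i. f (p i)) {i. i \<in> {..<N} \<and> p i = t} = prod (\<lambda>i. f t) {i. i < N \<and> p i = t}"
      by (rule prod.cong) auto
    then show ?thesis by simp
  qed
  ultimately show ?thesis by simp
qed

lemma sqrt_dbl2: "y \<ge> 0 \<Longrightarrow> sqrt (2 * y^2) = y * sqrt 2"
  by (simp add: real_sqrt_mult)

lemma sqrt_dbl: "y \<ge> 0 \<Longrightarrow> sqrt (y^2 + y^2) = y * sqrt 2"
proof -
  assume y: "y \<ge> 0"
  have "sqrt (y^2 + y^2) = sqrt (2 * y^2)" by simp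
  also have "\<dots> = sqrt 2 * sqrt (y^2)" by (rule real_sqrt_mult)
  finally show ?thesis using y by simp
qed

theorem corollary4p5:
  fixes n :: nat and u :: "nat \<Rightarrow> nat \<times> nat"
  assumes "n \<ge> 2"
    and "bij_betw u {..<4 * n} (carrier (Quat n))"
  shows "(odd n \<longrightarrow>
           char_poly (sombor_matrix (Quat n) u) =
             [: (4 * real n - 1) * sqrt 2, 1 :]
           * [: (2 * real n - 1) * sqrt 2, 1 :] ^ (2 * n - 3)
           * [: (2 * real n + 1) * sqrt 2, 1 :] ^ (2 * n - 1)
           * ( [: - (4 * real n - 1) * sqrt 2, 1 :]
               * [: - (2 * real n - 1) * (2 * real n - 3) * sqrt 2, 1 :]
               * [: - (2 * real n - 1) * (2 * real n + 1) * sqrt 2, 1 :]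
             - smult (8 * (real n - 1) * (10 * (real n)^2 - 6 * real n + 1))
                 [: - (2 * real n - 1) * (2 * real n + 1) * sqrt 2, 1 :]
             - smult (8 * real n * (10 * (real n)^2 - 2 * real n + 1))
                 [: - (2 * real n - 1) * (2 * real n - 3) * sqrt 2, 1 :])) \<and>
         (even n \<longrightarrow>
           char_poly (sombor_matrix (Quat n) u) =
             [: (4 * real n - 1) * sqrt 2, 1 :] ^ (4 * n - 1)
           * [: - ((4 * real n - 1)^2 * sqrt 2), 1 :])"
proof -
  have n0: "n > 0" and n2: "n \<ge> 2" using assms by auto
  define A where "A = sombor_matrix (Quat n) u"
  have cardG: "card (carrier (Quat n)) = 4*n" by (rule card_carrier)
  have Ac: "A \<in> carrier_mat (4*n) (4*n)" unfolding A_def sombor_matrix_def cardG by simp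
  have bij: "bij_betw u {..<4 * n} (carrier (Quat n))" by (rule assms(2))
  have uc: "u i \<in> carrier (Quat n)" if "i < 4*n" for i
    using bij_betwE[OF bij] that by blast
  have uinj: "i = j" if "i < 4*n" "j < 4*n" "u i = u j" for i j
    using bij_betw_imp_inj_on[OF bij] that by (meson inj_onD lessThan_iff)
  have Aij: "A $$ (i,j) = (if osc_adj (Quat n) (u i) (u j) then
      sqrt (real (osc_deg (Quat n) (u i))^2 + real (osc_deg (Quat n) (u j))^2) else 0)"
    if "i < 4*n" "j < 4*n" for i j
    unfolding A_def sombor_matrix_def cardG using that by simp
  have irr: "\<not> osc_adj (Quat n) g g" for g by (simp add: osc_adj_def)
  have cardcls: "card {i. i < 4*n \<and> cls n (u i) = t} = card {g \<in> carrier (Quat n). cls n g = t}" for t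
  proof -
    have img: "u ` {..<4 * n} = carrier (Quat n)" using bij by (simp add: bij_betw_def)
    have "{g \<in> carrier (Quat n). cls n g = t} = u ` {i. i < 4*n \<and> cls n (u i) = t}"
    proof (rule Set.set_eqI)
      fix g
      show "g \<in> {g \<in> carrier (Quat n). cls n g = t} \<longleftrightarrow> g \<in> u ` {i. i < 4*n \<and> cls n (u i) = t}"
      proof
        assume "g \<in> {g \<in> carrier (Quat n). cls n g = t}"
        then have g: "g \<in> carrier (Quat n)" "cls n g = t" by auto
        then obtain i where "i < 4*n" "u i = g" using img by (metis imageE lessThan_iff)
        then show "g \<in> u ` {i. i < 4*n \<and> cls n (u i) = t}" using g by blast
      next
        assume "g \<in> u ` {i. i < 4*n \<and> cls n (u i) = t}"
        then show "g \<in> {g \<in> carrier (Quat n). cls n g = t}" using uc by blast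
      qed
    qed
    moreover have "inj_on u {i. i < 4*n \<and> cls n (u i) = t}"
      using bij_betw_imp_inj_on[OF bij] by (rule inj_on_subset) auto
    ultimately show ?thesis by (simp add: card_image)
  qed
  show ?thesis
  proof (intro conjI impI)
    assume od: "odd n"
    define K where "K s t = (if (s = 1 \<and> t = 2) \<or> (s = 2 \<and> t = 1) then 0
        else sqrt (real (degc n s)^2 + real (degc n t)^2))" for s t :: nat
    define \<alpha> where "\<alpha> t = K t t" for t
    have rd0: "real (degc n 0) = 4 * real n - 1" using n0 by (simp add: degc_def of_nat_diff)
    have rd1: "real (degc n 1) = 2 * real n - 1" using n0 by (simp add: degc_def of_nat_diff)
    have rd2: "real (degc n 2) = 2 * real n + 1" by (simp add: degc_def)
    have a0: "\<alpha> 0 = (4 * real n - 1) * sqrt 2" unfolding \<alpha>_def K_def using rd0 n0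
      by (simp add: sqrt_dbl2)
    have a1: "\<alpha> 1 = (2 * real n - 1) * sqrt 2" unfolding \<alpha>_def K_def using rd1 n0
      by (simp add: sqrt_dbl2)
    have a2: "\<alpha> 2 = (2 * real n + 1) * sqrt 2" unfolding \<alpha>_def K_def using rd2 n0
      by (simp add: sqrt_dbl2)
    have KQ: "K 0 1 * K 0 1 = (4 * real n - 1)^2 + (2 * real n - 1)^2"
      unfolding K_def using rd0 rd1 by simp
    have KP: "K 0 2 * K 0 2 = (4 * real n - 1)^2 + (2 * real n + 1)^2"
      unfolding K_def using rd0 rd2 by simp
    have K10: "K 1 0 = K 0 1" and K20: "K 2 0 = K 0 2" unfolding K_def by (simp_all add: add.commute)
    have K12: "K 1 2 = 0" and K21: "K 2 1 = 0" unfolding K_def by simp_all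
    have m0: "card {i. i < 4*n \<and> cls n (u i) = 0} = 2" using cardcls card_C0[OF n0] by simp
    have m1: "card {i. i < 4*n \<and> cls n (u i) = 1} = 2*n - 2" using cardcls card_C1[OF n0] by simp
    have m2: "card {i. i < 4*n \<and> cls n (u i) = 2} = 2*n" using cardcls card_C2 by simp
    have rm1: "real (2*n - 2) = 2 * real n - 2" using n0 by (simp add: of_nat_diff)
    define F where "F = {- \<alpha> 0, - \<alpha> 1, - \<alpha> 2}"
    show "char_poly (sombor_matrix (Quat n) u) =
             [: (4 * real n - 1) * sqrt 2, 1 :]
           * [: (2 * real n - 1) * sqrt 2, 1 :] ^ (2 * n - 3)
           * [: (2 * real n + 1) * sqrt 2, 1 :] ^ (2 * n - 1)
           * ( [: - (4 * real n - 1) * sqrt 2, 1 :]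
               * [: - (2 * real n - 1) * (2 * real n - 3) * sqrt 2, 1 :]
               * [: - (2 * real n - 1) * (2 * real n + 1) * sqrt 2, 1 :]
             - smult (8 * (real n - 1) * (10 * (real n)^2 - 6 * real n + 1))
                 [: - (2 * real n - 1) * (2 * real n + 1) * sqrt 2, 1 :]
             - smult (8 * real n * (10 * (real n)^2 - 2 * real n + 1))
                 [: - (2 * real n - 1) * (2 * real n - 3) * sqrt 2, 1 :])"
      unfolding A_def[symmetric]
    proof (rule poly_eq_cofinite[of F])
      show "finite F" by (simp add: F_def)
    next
      fix x assume xF: "x \<notin> F"
      have nz: "x + \<alpha> 0 \<noteq> 0" "x + \<alpha> 1 \<noteq> 0" "x + \<alpha> 2 \<noteq> 0"
        using xF unfolding F_def by (auto simp: add_eq_0_iff2)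
      have bc: "poly (char_poly A) x = (\<Prod>i<4*n. x + \<alpha> (cls n (u i))) *
         det (mat 3 3 (\<lambda>(s,t). (if s = t then 1 else 0) - K s t * real (card {i. i < 4*n \<and> cls n (u i) = t}) / (x + \<alpha> t)))"
      proof (rule block_charpoly[OF Ac])
        show "\<forall>i<4 * n. cls n (u i) < 3" by (simp add: cls_range)
        show "\<forall>i<4 * n. A $$ (i, i) = K (cls n (u i)) (cls n (u i)) - \<alpha> (cls n (u i))"
          using Aij irr by (simp add: \<alpha>_def)
        show "\<forall>t<3. x + \<alpha> t \<noteq> 0"
        proof (intro allI impI)
          fix t :: nat assume "t < 3"
          then have "t = 0 \<or> t = 1 \<or> t = 2" by linarith
          then show "x + \<alpha> t \<noteq> 0" using nz by blast
        qed
        show "\<forall>i<4 * n. \<forall>j<4 * n. i \<noteq> j \<longrightarrow> A $$ (i, j) = K (cls n (u i)) (cls n (u j))"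
        proof (intro allI impI)
          fix i j assume ij: "i < 4*n" "j < 4*n" "i \<noteq> j"
          have ne: "u i \<noteq> u j" using uinj ij by blast
          have adj: "osc_adj (Quat n) (u i) (u j) \<longleftrightarrow>
            \<not> (cls n (u i) = 1 \<and> cls n (u j) = 2) \<and> \<not> (cls n (u i) = 2 \<and> cls n (u j) = 1)"
            using adj_odd[OF n2 od uc[OF ij(1)] uc[OF ij(2)]] ne by simp
          show "A $$ (i, j) = K (cls n (u i)) (cls n (u j))"
            unfolding Aij[OF ij(1,2)] adj K_def
            using deg_odd[OF n2 od uc[OF ij(1)]] deg_odd[OF n2 od uc[OF ij(2)]] by auto
        qed
      qed
      have pr: "(\<Prod>i<4*n. x + \<alpha> (cls n (u i))) = (x + \<alpha> 0)^2 * (x + \<alpha> 1)^(2*n-2) * (x + \<alpha> 2)^(2*n)"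
      proof -
        have "(\<Prod>i<4*n. x + \<alpha> (cls n (u i))) = (\<Prod>t<3. (x + \<alpha> t) ^ card {i. i < 4*n \<and> cls n (u i) = t})"
          by (rule prod_class) (simp add: cls_range)
        also have "\<dots> = (x + \<alpha> 0) ^ card {i. i < 4*n \<and> cls n (u i) = 0} *
            (x + \<alpha> 1) ^ card {i. i < 4*n \<and> cls n (u i) = 1} * (x + \<alpha> 2) ^ card {i. i < 4*n \<and> cls n (u i) = 2}"
        proof -
          have three: "{..<3::nat} = {0,1,2}" by auto
          show ?thesis unfolding three by (simp add: mult.assoc)
        qed
        finally show ?thesis unfolding m0 m1 m2 .
      qed
      have dt: "det (mat 3 3 (\<lambda>(s,t). (if s = t then 1 else 0) - K s t * real (card {i. i < 4*n \<and> cls n (u i) = t}) / (x + \<alpha> t)))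
        = (1 - \<alpha> 0 * 2 / (x + \<alpha> 0)) * (1 - \<alpha> 1 * (2 * real n - 2) / (x + \<alpha> 1)) * (1 - \<alpha> 2 * (2 * real n) / (x + \<alpha> 2))
          - (- (K 0 2 * (2 * real n) / (x + \<alpha> 2))) * (1 - \<alpha> 1 * (2 * real n - 2) / (x + \<alpha> 1)) * (- (K 0 2 * 2 / (x + \<alpha> 0)))
          - (- (K 0 1 * (2 * real n - 2) / (x + \<alpha> 1))) * (- (K 0 1 * 2 / (x + \<alpha> 0))) * (1 - \<alpha> 2 * (2 * real n) / (x + \<alpha> 2))"
        unfolding det3 using m0 m1 m2 rm1 K10 K20 K12 K21
        by (simp add: \<alpha>_def)
      have alg: "(x + \<alpha> 0) * (x + \<alpha> 1) * (x + \<alpha> 2) * (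
          (1 - \<alpha> 0 * 2 / (x + \<alpha> 0)) * (1 - \<alpha> 1 * (2 * real n - 2) / (x + \<alpha> 1)) * (1 - \<alpha> 2 * (2 * real n) / (x + \<alpha> 2))
          - (- (K 0 2 * (2 * real n) / (x + \<alpha> 2))) * (1 - \<alpha> 1 * (2 * real n - 2) / (x + \<alpha> 1)) * (- (K 0 2 * 2 / (x + \<alpha> 0)))
          - (- (K 0 1 * (2 * real n - 2) / (x + \<alpha> 1))) * (- (K 0 1 * 2 / (x + \<alpha> 0))) * (1 - \<alpha> 2 * (2 * real n) / (x + \<alpha> 2)))
        = (x - (4 * real n - 1) * sqrt 2) * (x - (2 * real n - 1) * (2 * real n - 3) * sqrt 2) * (x - (2 * real n - 1) * (2 * real n + 1) * sqrt 2)
          - 8 * (real n - 1) * (10 * (real n)^2 - 6 * real n + 1) * (x - (2 * real n - 1) * (2 * real n + 1) * sqrt 2)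
          - 8 * real n * (10 * (real n)^2 - 2 * real n + 1) * (x - (2 * real n - 1) * (2 * real n - 3) * sqrt 2)"
        unfolding a0 a1 a2
        by (rule odd_alg[OF _ KQ KP refl refl refl]) (use nz a0 a1 a2 in auto)
      have e1: "(x + \<alpha> 1)^(2*n-2) = (x + \<alpha> 1)^(2*n-3) * (x + \<alpha> 1)"
        using n2 by (simp add: power_Suc2[symmetric] Suc_diff_Suc numeral_3_eq_3 numeral_2_eq_2)
      have e2: "(x + \<alpha> 2)^(2*n) = (x + \<alpha> 2)^(2*n-1) * (x + \<alpha> 2)"
        using n2 by (simp add: power_Suc2[symmetric])
      show "poly (char_poly A) x = poly ([: (4 * real n - 1) * sqrt 2, 1 :]
           * [: (2 * real n - 1) * sqrt 2, 1 :] ^ (2 * n - 3)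
           * [: (2 * real n + 1) * sqrt 2, 1 :] ^ (2 * n - 1)
           * ( [: - (4 * real n - 1) * sqrt 2, 1 :]
               * [: - (2 * real n - 1) * (2 * real n - 3) * sqrt 2, 1 :]
               * [: - (2 * real n - 1) * (2 * real n + 1) * sqrt 2, 1 :]
             - smult (8 * (real n - 1) * (10 * (real n)^2 - 6 * real n + 1))
                 [: - (2 * real n - 1) * (2 * real n + 1) * sqrt 2, 1 :]
             - smult (8 * real n * (10 * (real n)^2 - 2 * real n + 1))
                 [: - (2 * real n - 1) * (2 * real n - 3) * sqrt 2, 1 :])) x"
      proof -
        define CUB where "CUB = [: - (4 * real n - 1) * sqrt 2, 1 :]
               * [: - (2 * real n - 1) * (2 * real n - 3) * sqrt 2, 1 :]
               * [: - (2 * real n - 1) * (2 * real n + 1) * sqrt 2, 1 :]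
             - smult (8 * (real n - 1) * (10 * (real n)^2 - 6 * real n + 1))
                 [: - (2 * real n - 1) * (2 * real n + 1) * sqrt 2, 1 :]
             - smult (8 * real n * (10 * (real n)^2 - 2 * real n + 1))
                 [: - (2 * real n - 1) * (2 * real n - 3) * sqrt 2, 1 :]"
        have f0: "poly [: (4 * real n - 1) * sqrt 2, 1 :] x = x + \<alpha> 0" by (subst a0) simp
        have f1: "poly [: (2 * real n - 1) * sqrt 2, 1 :] x = x + \<alpha> 1" by (subst a1) simp
        have f2: "poly [: (2 * real n + 1) * sqrt 2, 1 :] x = x + \<alpha> 2" by (subst a2) simp
        have fc: "poly CUB x = (x - (4 * real n - 1) * sqrt 2) * (x - (2 * real n - 1) * (2 * real n - 3) * sqrt 2) * (x - (2 * real n - 1) * (2 * real n + 1) * sqrt 2)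
          - 8 * (real n - 1) * (10 * (real n)^2 - 6 * real n + 1) * (x - (2 * real n - 1) * (2 * real n + 1) * sqrt 2)
          - 8 * real n * (10 * (real n)^2 - 2 * real n + 1) * (x - (2 * real n - 1) * (2 * real n - 3) * sqrt 2)"
          unfolding CUB_def by (simp add: algebra_simps)
        have R: "poly ([: (4 * real n - 1) * sqrt 2, 1 :]
           * [: (2 * real n - 1) * sqrt 2, 1 :] ^ (2 * n - 3)
           * [: (2 * real n + 1) * sqrt 2, 1 :] ^ (2 * n - 1) * CUB) x
           = (x + \<alpha> 0) * (x + \<alpha> 1) ^ (2 * n - 3) * (x + \<alpha> 2) ^ (2 * n - 1) * poly CUB x"
          by (simp only: poly_mult poly_power f0 f1 f2)
        have L: "poly (char_poly A) x = (x + \<alpha> 0) * (x + \<alpha> 1) ^ (2 * n - 3) * (x + \<alpha> 2) ^ (2 * n - 1) *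
           ((x + \<alpha> 0) * (x + \<alpha> 1) * (x + \<alpha> 2) * (
          (1 - \<alpha> 0 * 2 / (x + \<alpha> 0)) * (1 - \<alpha> 1 * (2 * real n - 2) / (x + \<alpha> 1)) * (1 - \<alpha> 2 * (2 * real n) / (x + \<alpha> 2))
          - (- (K 0 2 * (2 * real n) / (x + \<alpha> 2))) * (1 - \<alpha> 1 * (2 * real n - 2) / (x + \<alpha> 1)) * (- (K 0 2 * 2 / (x + \<alpha> 0)))
          - (- (K 0 1 * (2 * real n - 2) / (x + \<alpha> 1))) * (- (K 0 1 * 2 / (x + \<alpha> 0))) * (1 - \<alpha> 2 * (2 * real n) / (x + \<alpha> 2))))"
          unfolding bc pr dt e1 e2 by (simp only: power2_eq_square mult_ac)
        show ?thesis unfolding CUB_def[symmetric] R L alg fc ..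
      qed
    qed
  next
    assume ev: "even n"
    show "char_poly (sombor_matrix (Quat n) u) =
             [: (4 * real n - 1) * sqrt 2, 1 :] ^ (4 * n - 1)
           * [: - ((4 * real n - 1)^2 * sqrt 2), 1 :]"
      unfolding A_def[symmetric]
    proof (rule poly_eq_cofinite[of "{- ((4 * real n - 1) * sqrt 2)}"])
      fix x assume xF: "x \<notin> {- ((4 * real n - 1) * sqrt 2)}"
      define c where "c = (4 * real n - 1) * sqrt 2"
      have nz: "x + c \<noteq> 0" using xF unfolding c_def by (auto simp: add_eq_0_iff2)
      have rdeg: "real (4*n-1) = 4 * real n - 1" using n0 by (simp add: of_nat_diff)
      have bc: "poly (char_poly A) x = (\<Prod>i<4*n. x + (\<lambda>t. c) ((\<lambda>i. 0::nat) i)) *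
         det (mat 1 1 (\<lambda>(s,t). (if s = t then 1 else 0) - (\<lambda>s t. c) s t * real (card {i. i < 4*n \<and> (\<lambda>i. 0::nat) i = t}) / (x + (\<lambda>t. c) t)))"
      proof (rule block_charpoly[OF Ac])
        show "\<forall>i<4 * n. (0::nat) < 1" by simp
        show "\<forall>i<4 * n. A $$ (i, i) = c - c"
          using Aij irr by simp
        show "\<forall>t<1. x + c \<noteq> 0" using nz by simp
        show "\<forall>i<4 * n. \<forall>j<4 * n. i \<noteq> j \<longrightarrow> A $$ (i, j) = c"
        proof (intro allI impI)
          fix i j assume ij: "i < 4*n" "j < 4*n" "i \<noteq> j"
          have ne: "u i \<noteq> u j" using uinj ij by blast
          have adj: "osc_adj (Quat n) (u i) (u j)"
            using adj_even[OF n2 ev uc[OF ij(1)] uc[OF ij(2)]] ne by simp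
          have "A $$ (i, j) = sqrt (real (4*n-1)^2 + real (4*n-1)^2)"
            unfolding Aij[OF ij(1,2)] using adj deg_even[OF n2 ev uc[OF ij(1)]] deg_even[OF n2 ev uc[OF ij(2)]] by simp
          also have "\<dots> = c" unfolding rdeg c_def using n0 by (simp add: sqrt_dbl2)
          finally show "A $$ (i, j) = c" .
        qed
      qed
      have bc2: "poly (char_poly A) x = (x + c) ^ (4*n) * (1 - c * (4 * real n) / (x + c))"
        unfolding bc by (simp add: det_single)
      have e: "(x + c) ^ (4*n) = (x + c) ^ (4*n-1) * (x + c)"
        using n0 by (simp add: power_Suc2[symmetric])
      have "(x + c) * (1 - c * (4 * real n) / (x + c)) = x - (4 * real n - 1)^2 * sqrt 2"
        using nz unfolding c_def by (simp add: field_simps power2_eq_square)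
      then have "poly (char_poly A) x = (x + c) ^ (4*n-1) * (x - (4 * real n - 1)^2 * sqrt 2)"
        unfolding bc2 e by (simp add: mult.assoc)
      moreover have "poly ([: (4 * real n - 1) * sqrt 2, 1 :] ^ (4 * n - 1)
           * [: - ((4 * real n - 1)^2 * sqrt 2), 1 :]) x = (x + c) ^ (4*n-1) * (x - (4 * real n - 1)^2 * sqrt 2)"
        unfolding c_def by (simp add: add.commute algebra_simps)
      ultimately show "poly (char_poly A) x = poly ([: (4 * real n - 1) * sqrt 2, 1 :] ^ (4 * n - 1)
           * [: - ((4 * real n - 1)^2 * sqrt 2), 1 :]) x" by simp
    qed simp
  qed
qed


end
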